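(* Let $G$ be a connected weighted multigraph on the vertex set $V$, $|V|\ge 2$, with positive edge weights and weighted adjacency matrix $A$. Let $i,j\in V$ be distinct. Then for every $t\in\bigl(0,(\rho(A_{jj}))^{-1}\bigr)$, the total weight $r_{ij(1)}(t)$ of all $i\to j$ hitting walks in $G(t)$ is finite and $$r_{ij(1)}(t)=\bigl(t^{-1}I-A_{jj}\bigr)^{-1}_i\,a_{\setminus j\,j}.$$
   Context: $G$ may have loops and multiple edges; $A=(a_{ij})$ has $a_{ij}$ equal to the sum of weights of the edges joining $i$ and $j$; $\rho(\cdot)$ denotes spectral radius. $G(t)$ is $G$ with all edge weights multiplied by $t$. A $v_0\to v_m$ walk is an alternating sequence of vertices and edges $v_0,e_1,v_1,\dots,e_m,v_m$ with $e_k$ joining $v_{k-1},v_k$; its weight is the product of its edge weights; a hitting $v_0\to v_m$ walk is one containing only one occurrence of $v_m$. Matrices are indexed by vertices; $A_{jj}$ is $A$ with row and column $j$ deleted (indexed by $V\setminus\{j\}$); $N^{-1}_i$ is the row of $N^{-1}$ indexed by $i$; $a_{\setminus j\,j}$ is column $j$ of $A$ with $a_{jj}$ removed. *)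

theory Defs
  imports "HOL-Analysis.Analysis" "Jordan_Normal_Form.Spectral_Radius" "Jordan_Normal_Form.Determinant"
begin

(* A weighted multigraph on the vertex set {0..<n}: a finite edge set E of some type 'e,
   each edge e has a set of end vertices  ends e  (a singleton for a loop, a 2-set otherwise),
   and a weight  w e. *)
definition multigraph :: "nat \<Rightarrow> 'e set \<Rightarrow> ('e \<Rightarrow> nat set) \<Rightarrow> bool" where
  "multigraph n E ends \<longleftrightarrow> finite E \<and>
     (\<forall>e\<in>E. ends e \<subseteq> {0..<n} \<and> 1 \<le> card (ends e) \<and> card (ends e) \<le> 2)"

definition adj_mat :: "nat \<Rightarrow> 'e set \<Rightarrow> ('e \<Rightarrow> nat set) \<Rightarrow> ('e \<Rightarrow> real) \<Rightarrow> real mat" where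
  "adj_mat n E ends w = mat n n (\<lambda>(i,j). \<Sum>e\<in>{e\<in>E. ends e = {i,j}}. w e)"

(* A walk v0,e1,v1,...,em,vm is represented as (v0, [(e1,v1),...,(em,vm)]). *)
type_synonym 'e walk = "nat \<times> ('e \<times> nat) list"

definition walk_verts :: "'e walk \<Rightarrow> nat list" where
  "walk_verts p = fst p # map snd (snd p)"

definition is_walk :: "nat \<Rightarrow> 'e set \<Rightarrow> ('e \<Rightarrow> nat set) \<Rightarrow> 'e walk \<Rightarrow> bool" where
  "is_walk n E ends p \<longleftrightarrow> fst p < n \<and>
     (\<forall>k < length (snd p). fst (snd p ! k) \<in> E \<and>
        ends (fst (snd p ! k)) = {walk_verts p ! k, walk_verts p ! Suc k})"

definition walk_weight :: "('e \<Rightarrow> real) \<Rightarrow> 'e walk \<Rightarrow> real" where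
  "walk_weight w p = prod_list (map (\<lambda>x. w (fst x)) (snd p))"

definition connected_mg :: "nat \<Rightarrow> 'e set \<Rightarrow> ('e \<Rightarrow> nat set) \<Rightarrow> bool" where
  "connected_mg n E ends \<longleftrightarrow> (\<forall>u<n. \<forall>v<n. \<exists>p. is_walk n E ends p \<and> fst p = u \<and> last (walk_verts p) = v)"

definition hitting_walks :: "nat \<Rightarrow> 'e set \<Rightarrow> ('e \<Rightarrow> nat set) \<Rightarrow> nat \<Rightarrow> nat \<Rightarrow> 'e walk set" where
  "hitting_walks n E ends i j = {p. is_walk n E ends p \<and> fst p = i \<and> last (walk_verts p) = j \<and>
      length (filter (\<lambda>v. v = j) (walk_verts p)) = 1}"

(* index of vertex k (k \<noteq> j) in the matrices indexed by V - {j} = {0..<n} - {j} *)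
definition del_pos :: "nat \<Rightarrow> nat \<Rightarrow> nat" where
  "del_pos j k = (if k < j then k else k - 1)"

definition del_vert :: "nat \<Rightarrow> nat \<Rightarrow> nat" where
  "del_vert j k = (if k < j then k else k + 1)"

definition col_del :: "real mat \<Rightarrow> nat \<Rightarrow> real vec" where
  "col_del A j = vec (dim_row A - 1) (\<lambda>k. A $$ (del_vert j k, j))"

end

theory Submission
  imports Defs
begin

lemma walk_verts_Cons: "walk_verts (u, (e,v)#xs) = u # walk_verts (v, xs)"
  by (simp add: walk_verts_def)

lemma all_less_Suc': "(\<forall>k<Suc m. P k) \<longleftrightarrow> P 0 \<and> (\<forall>k<m. P (Suc k))"
  using less_Suc_eq_0_disj by auto

lemma is_walk_Cons:
  assumes mg: "multigraph n E ends"
  shows "is_walk n E ends (u,(e,v)#xs) \<longleftrightarrow> u < n \<and> e \<in> E \<and> ends e = {u,v} \<and> is_walk n E ends (v,xs)"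
proof -
  have "ends e = {u,v} \<Longrightarrow> e \<in> E \<Longrightarrow> v < n" using mg unfolding multigraph_def by auto
  moreover have "walk_verts (v,xs) ! 0 = v" by (simp add: walk_verts_def)
  ultimately show ?thesis
    unfolding is_walk_def walk_verts_Cons by (auto simp: all_less_Suc')
qed

lemma last_walk_verts_Cons: "last (walk_verts (u, (e,v)#xs)) = last (walk_verts (v,xs))"
  by (simp add: walk_verts_def)

lemma hitting_Cons:
  assumes mg: "multigraph n E ends" and uj: "u \<noteq> j"
  shows "(u',(e,v)#xs) \<in> hitting_walks n E ends u j \<longleftrightarrow> u' = u \<and> u < n \<and> e \<in> E \<and> ends e = {u,v} \<and>
     ((v = j \<and> xs = [] \<and> j < n) \<or> (v \<noteq> j \<and> (v,xs) \<in> hitting_walks n E ends v j))"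
proof -
  define vs where "vs = walk_verts (v,xs)"
  have vs: "vs = v # map snd xs" by (simp add: vs_def walk_verts_def)
  have cnt: "length (filter (\<lambda>x. x = j) (walk_verts (u',(e,v)#xs))) = length (filter (\<lambda>x. x = j) vs)"
    if "u' = u" using that uj by (simp add: walk_verts_Cons vs_def)
  have L: "(u',(e,v)#xs) \<in> hitting_walks n E ends u j \<longleftrightarrow> u' = u \<and> u < n \<and> e \<in> E \<and> ends e = {u,v} \<and>
      is_walk n E ends (v,xs) \<and> last vs = j \<and> length (filter (\<lambda>x. x = j) vs) = 1"
    unfolding hitting_walks_def using cnt
    by (auto simp: is_walk_Cons[OF mg] last_walk_verts_Cons vs_def)
  show ?thesis
  proof (cases "v = j")
    case True
    show ?thesis
    proof (cases "xs = []")
      case True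
      thus ?thesis using \<open>v = j\<close> L by (simp add: vs is_walk_def)
    next
      case False
      have "last vs \<in> set (map snd xs)" using False last_in_set[of "map snd xs"] by (simp add: vs)
      hence "last vs = j \<Longrightarrow> length (filter (\<lambda>x. x = j) vs) \<noteq> 1" using \<open>v = j\<close>
        by (simp add: vs filter_empty_conv) (metis (mono_tags, lifting) comp_apply image_iff)
      thus ?thesis using L False True by auto
    qed
  next
    case False
    thus ?thesis using L by (auto simp: hitting_walks_def vs_def)
  qed
qed

definition Sw :: "nat \<Rightarrow> 'e set \<Rightarrow> ('e \<Rightarrow> nat set) \<Rightarrow> nat \<Rightarrow> nat \<Rightarrow> nat \<Rightarrow> 'e walk set" where
  "Sw n E ends j u m = {p \<in> hitting_walks n E ends u j. length (snd p) = m}"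

lemma is_walk_set:
  assumes mg: "multigraph n E ends" and w: "is_walk n E ends p"
  shows "set (snd p) \<subseteq> E \<times> {0..<n}"
proof
  fix x assume "x \<in> set (snd p)"
  then obtain k where k: "k < length (snd p)" "snd p ! k = x" by (auto simp: in_set_conv_nth)
  from w k have e: "fst x \<in> E" "ends (fst x) = {walk_verts p ! k, walk_verts p ! Suc k}"
    unfolding is_walk_def by auto
  have "walk_verts p ! Suc k = snd x" using k by (simp add: walk_verts_def)
  with e mg show "x \<in> E \<times> {0..<n}" unfolding multigraph_def by (cases x) auto
qed

lemma finite_Sw:
  assumes mg: "multigraph n E ends"
  shows "finite (Sw n E ends j u m)"
proof -
  have fin: "finite (E \<times> {0..<n})" using mg unfolding multigraph_def by auto
  have "Sw n E ends j u m \<subseteq> {u} \<times> {xs. set xs \<subseteq> E \<times> {0..<n} \<and> length xs = m}"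
    unfolding Sw_def hitting_walks_def by (fastforce dest: is_walk_set[OF mg])
  moreover have "finite ({u} \<times> {xs. set xs \<subseteq> E \<times> {0..<n} \<and> length xs = m})"
    using finite_lists_length_eq[OF fin] by auto
  ultimately show ?thesis by (rule finite_subset)
qed

lemma Sw_0:
  assumes "u \<noteq> j" shows "Sw n E ends j u 0 = {}"
  using assms unfolding Sw_def hitting_walks_def by (auto simp: walk_verts_def)

lemma Sw_1:
  assumes mg: "multigraph n E ends" and uj: "u \<noteq> j" "u < n" "j < n"
  shows "Sw n E ends j u (Suc 0) = (\<lambda>e. (u,[(e,j)])) ` {e\<in>E. ends e = {u,j}}"
proof (rule Set.set_eqI)
  fix p :: "'a walk"
  obtain u' xs where p: "p = (u',xs)" by (cases p)
  show "p \<in> Sw n E ends j u (Suc 0) \<longleftrightarrow> p \<in> (\<lambda>e. (u,[(e,j)])) ` {e\<in>E. ends e = {u,j}}"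
  proof (cases xs)
    case Nil thus ?thesis by (auto simp add: p Sw_def)
  next
    case (Cons a ys)
    obtain e v where a: "a = (e,v)" by (cases a)
    have hn: "(v,[]) \<in> hitting_walks n E ends v j \<Longrightarrow> v = j"
      by (simp add: hitting_walks_def walk_verts_def)
    show ?thesis using hitting_Cons[OF mg uj(1), of u' e v ys] uj hn
      by (auto simp: p Cons a Sw_def)
  qed
qed

lemma Sw_SS:
  assumes mg: "multigraph n E ends" and uj: "u \<noteq> j" "u < n" "j < n"
  shows "Sw n E ends j u (Suc (Suc m)) = (\<lambda>(ve,q). (u,(snd ve, fst ve) # snd q)) `
     (SIGMA ve:(SIGMA v:{0..<n}-{j}. {e\<in>E. ends e = {u,v}}). Sw n E ends j (fst ve) (Suc m))"
    (is "?L = ?h ` ?S")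
proof (rule Set.set_eqI)
  fix p :: "'a walk"
  obtain u' xs where p: "p = (u',xs)" by (cases p)
  have vlt: "v < n" if "e \<in> E" "ends e = {u,v}" for e v using that mg unfolding multigraph_def by auto
  show "p \<in> ?L \<longleftrightarrow> p \<in> ?h ` ?S"
  proof
    assume "p \<in> ?L"
    hence h0: "(u',xs) \<in> hitting_walks n E ends u j" "length xs = Suc (Suc m)" by (simp_all add: p Sw_def)
    then obtain e v ys where xs: "xs = (e,v)#ys" by (cases xs) auto
    have h: "(u',(e,v)#ys) \<in> hitting_walks n E ends u j" "length ys = Suc m" using h0 by (simp_all add: xs)
    have hc: "u' = u \<and> u < n \<and> e \<in> E \<and> ends e = {u,v} \<and>
     ((v = j \<and> ys = [] \<and> j < n) \<or> (v \<noteq> j \<and> (v,ys) \<in> hitting_walks n E ends v j))"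
      by (rule h(1)[unfolded hitting_Cons[OF mg uj(1)]])
    have ysne: "ys \<noteq> []" using h(2) by auto
    have *: "u' = u" "e \<in> E" "ends e = {u,v}" "v \<noteq> j" "(v,ys) \<in> hitting_walks n E ends v j"
      using hc ysne by auto
    have mem: "((v,e),(v,ys)) \<in> ?S"
    proof (rule SigmaI)
      show "(v,e) \<in> (SIGMA v:{0..<n}-{j}. {e\<in>E. ends e = {u,v}})"
        using * vlt[OF *(2,3)] by simp
      show "(v,ys) \<in> Sw n E ends j (fst (v,e)) (Suc m)" using *(5) h(2) by (simp add: Sw_def)
    qed
    have "p = ?h ((v,e),(v,ys))" by (simp add: p xs *(1))
    thus "p \<in> ?h ` ?S" using mem by (rule image_eqI)
  next
    assume "p \<in> ?h ` ?S"
    then obtain x where x: "x \<in> ?S" "p = ?h x" by (rule imageE)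
    obtain v' e' qv qs where xx: "x = ((v',e'),(qv,qs))" by (metis prod.collapse)
    have x1: "(v',e') \<in> (SIGMA v:{0..<n}-{j}. {e\<in>E. ends e = {u,v}})" "(qv,qs) \<in> Sw n E ends j v' (Suc m)"
      using x(1) unfolding xx by auto
    have p2: "p = (u, (e',v') # qs)" using x(2) unfolding xx by simp
    have q1: "v' \<noteq> j" "e' \<in> E" "ends e' = {u,v'}" using x1(1) by auto
    have q2: "(qv,qs) \<in> hitting_walks n E ends v' j" "length qs = Suc m"
      using x1(2) unfolding Sw_def by auto
    have "qv = v'" using q2(1) unfolding hitting_walks_def by simp
    hence "(u, (e',v') # qs) \<in> hitting_walks n E ends u j"
      apply (intro hitting_Cons[OF mg uj(1), of u e' v' qs, THEN iffD2])
      using q1 q2 uj(2) by simp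
    thus "p \<in> ?L" using q2(2) p2 unfolding Sw_def by simp
  qed
qed

lemma walk_weight_Cons: "walk_weight w (u,(e,v)#xs) = w e * walk_weight w (v,xs)"
  by (simp add: walk_weight_def)

lemma adj_mat_index:
  "a < n \<Longrightarrow> b < n \<Longrightarrow> adj_mat n E ends w $$ (a,b) = (\<Sum>e\<in>{e\<in>E. ends e = {a,b}}. w e)"
  by (simp add: adj_mat_def)

lemma sum_mult_aux: "(\<Sum>e\<in>A. t * w e * c) = t * sum w A * (c::real)"
  by (simp add: sum_distrib_left sum_distrib_right algebra_simps)

lemma G_1:
  assumes mg: "multigraph n E ends" and uj: "u \<noteq> j" "u < n" "j < n"
  shows "sum (walk_weight (\<lambda>e. t * w e)) (Sw n E ends j u (Suc 0)) = t * adj_mat n E ends w $$ (u,j)"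
proof -
  have fin: "finite {e\<in>E. ends e = {u,j}}" using mg unfolding multigraph_def by auto
  have inj: "inj_on (\<lambda>e. (u,[(e,j)])) {e\<in>E. ends e = {u,j}}" by (auto simp: inj_on_def)
  show ?thesis
    unfolding Sw_1[OF assms] sum.reindex[OF inj] adj_mat_index[OF uj(2,3)]
    by (simp add: walk_weight_def sum_distrib_left)
qed

lemma G_SS:
  assumes mg: "multigraph n E ends" and uj: "u \<noteq> j" "u < n" "j < n"
  shows "sum (walk_weight (\<lambda>e. t * w e)) (Sw n E ends j u (Suc (Suc m))) =
    (\<Sum>v\<in>{0..<n}-{j}. t * adj_mat n E ends w $$ (u,v) * sum (walk_weight (\<lambda>e. t * w e)) (Sw n E ends j v (Suc m)))"
proof -
  let ?wt = "walk_weight (\<lambda>e. t * w e)"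
  let ?P = "SIGMA v:{0..<n}-{j}. {e\<in>E. ends e = {u,v}}"
  let ?h = "(\<lambda>(ve,q). (u,(snd ve, fst ve) # snd q)) :: (nat \<times> 'a) \<times> 'a walk \<Rightarrow> 'a walk"
  have finE: "finite E" using mg unfolding multigraph_def by auto
  have finP: "finite ?P" using finE by auto
  have inj: "inj_on ?h (SIGMA ve:?P. Sw n E ends j (fst ve) (Suc m))"
  proof (rule inj_onI)
    fix x y assume x: "x \<in> (SIGMA ve:?P. Sw n E ends j (fst ve) (Suc m))"
      and y: "y \<in> (SIGMA ve:?P. Sw n E ends j (fst ve) (Suc m))" and eq: "?h x = ?h y"
    obtain v1 e1 q1 where x': "x = ((v1,e1),q1)" by (metis prod.collapse)
    obtain v2 e2 q2 where y': "y = ((v2,e2),q2)" by (metis prod.collapse)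
    have "fst q1 = v1" "fst q2 = v2" using x y by (auto simp: x' y' Sw_def hitting_walks_def)
    thus "x = y" using eq by (auto simp: x' y' prod_eq_iff)
  qed
  have "sum ?wt (Sw n E ends j u (Suc (Suc m))) = sum (?wt \<circ> ?h) (SIGMA ve:?P. Sw n E ends j (fst ve) (Suc m))"
    unfolding Sw_SS[OF assms] by (rule sum.reindex[OF inj])
  also have "\<dots> = (\<Sum>(ve,q)\<in>(SIGMA ve:?P. Sw n E ends j (fst ve) (Suc m)). t * w (snd ve) * ?wt q)"
    by (rule sum.cong) (auto simp: walk_weight_def)
  also have "\<dots> = (\<Sum>ve\<in>?P. \<Sum>q\<in>Sw n E ends j (fst ve) (Suc m). t * w (snd ve) * ?wt q)"
    by (rule sum.Sigma[symmetric]) (use finP finite_Sw[OF mg] in auto)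
  also have "\<dots> = (\<Sum>ve\<in>?P. t * w (snd ve) * sum ?wt (Sw n E ends j (fst ve) (Suc m)))"
    by (simp add: sum_distrib_left)
  also have "\<dots> = (\<Sum>(v,e)\<in>?P. t * w e * sum ?wt (Sw n E ends j v (Suc m)))"
    by (rule sum.cong) auto
  also have "\<dots> = (\<Sum>v\<in>{0..<n}-{j}. \<Sum>e\<in>{e\<in>E. ends e = {u,v}}. t * w e * sum ?wt (Sw n E ends j v (Suc m)))"
    by (rule sum.Sigma[symmetric]) (use finE in auto)
  also have "\<dots> = (\<Sum>v\<in>{0..<n}-{j}. t * adj_mat n E ends w $$ (u,v) * sum ?wt (Sw n E ends j v (Suc m)))"
    apply (rule sum.cong, simp)
    apply (subst adj_mat_index) using uj apply auto[2]
    apply (rule sum_mult_aux)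
    done
  finally show ?thesis .
qed

lemma has_sum_partition_nonneg:
  fixes f :: "'a \<Rightarrow> real" and S :: "nat \<Rightarrow> 'a set"
  assumes nn: "\<And>x. x \<in> W \<Longrightarrow> f x \<ge> 0" and W: "W = (\<Union>m. S m)" and fin: "\<And>m. finite (S m)"
    and disj: "\<And>m m'. m \<noteq> m' \<Longrightarrow> S m \<inter> S m' = {}" and s: "(\<lambda>m. sum f (S m)) sums x"
  shows "(f has_sum x) W"
proof -
  have g_nn: "sum f (S m) \<ge> 0" for m using nn W by (intro sum_nonneg) auto
  have U: "sum f (\<Union>m<K. S m) = (\<Sum>m<K. sum f (S m))" for K
    by (rule sum.UNION_disjoint) (use fin disj in auto)
  have partial_le: "(\<Sum>m<K. sum f (S m)) \<le> x" for K
    using sum_le_suminf[of "\<lambda>m. sum f (S m)" "{..<K}"] s g_nn by (auto simp: sums_iff)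
  have fin_le: "sum f F \<le> x" if F: "finite F" "F \<subseteq> W" for F
  proof -
    have "\<forall>p\<in>F. \<exists>m. p \<in> S m" using that W by auto
    then obtain mm where mm: "\<And>p. p\<in>F \<Longrightarrow> p \<in> S (mm p)" by metis
    define K where "K = Suc (Max (mm ` F))"
    have sub: "F \<subseteq> (\<Union>m<K. S m)"
    proof
      fix p assume p: "p \<in> F"
      have "mm p \<le> Max (mm ` F)" using F(1) p by auto
      hence "mm p < K" by (simp add: K_def)
      thus "p \<in> (\<Union>m<K. S m)" using mm[OF p] by auto
    qed
    have "sum f F \<le> sum f (\<Union>m<K. S m)"
      by (rule sum_mono2) (use fin sub nn W in auto)
    also have "\<dots> \<le> x" using U partial_le by simp
    finally show ?thesis .
  qed
  have summ: "f summable_on W"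
    by (rule nonneg_bdd_above_summable_on) (use nn fin_le in \<open>auto intro!: bdd_aboveI2\<close>)
  let ?s = "infsum f W"
  have hs: "(f has_sum ?s) W" using summ by (simp add: summable_iff_has_sum_infsum)
  have le1: "?s \<le> x" by (rule infsum_le_finite_sums[OF summ fin_le])
  have le2: "(\<Sum>m<K. sum f (S m)) \<le> ?s" for K
  proof -
    have "(f has_sum sum f (\<Union>m<K. S m)) (\<Union>m<K. S m)" using fin by (intro has_sum_finite) auto
    hence "sum f (\<Union>m<K. S m) \<le> ?s"
      by (rule has_sum_mono_neutral[OF _ hs]) (use W nn in auto)
    thus ?thesis using U by simp
  qed
  have "x \<le> ?s"
    using s unfolding sums_def by (rule LIMSEQ_le_const2) (use le2 in auto)
  with le1 hs show ?thesis by simp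
qed

lemma smult_mat_vec_assoc':
  fixes X :: "'a::comm_ring_1 mat"
  assumes "X \<in> carrier_mat m m" "v \<in> carrier_vec m"
  shows "(a \<cdot>\<^sub>m X) *\<^sub>v v = a \<cdot>\<^sub>v (X *\<^sub>v v)"
  by (rule eq_vecI) (use assms in \<open>auto simp: scalar_prod_def sum_distrib_left ac_simps\<close>)

lemma smult_pow_mat:
  fixes X :: "'a::comm_ring_1 mat"
  assumes X: "X \<in> carrier_mat m m"
  shows "(a \<cdot>\<^sub>m X) ^\<^sub>m K = a ^ K \<cdot>\<^sub>m (X ^\<^sub>m K)"
proof (induction K)
  case 0 thus ?case using X by (auto intro!: eq_matI)
next
  case (Suc K)
  have "(a \<cdot>\<^sub>m X) ^\<^sub>m Suc K = (a ^ K \<cdot>\<^sub>m (X ^\<^sub>m K)) * (a \<cdot>\<^sub>m X)" using Suc by simp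
  also have "\<dots> = a ^ K \<cdot>\<^sub>m ((X ^\<^sub>m K) * (a \<cdot>\<^sub>m X))"
    by (rule mult_smult_assoc_mat[of _ m m _ m]) (use X in auto)
  also have "\<dots> = a ^ K \<cdot>\<^sub>m (a \<cdot>\<^sub>m ((X ^\<^sub>m K) * X))"
    by (subst mult_smult_distrib[of _ m m _ m]) (use X in auto)
  also have "\<dots> = a ^ Suc K \<cdot>\<^sub>m (X ^\<^sub>m Suc K)"
    by (rule eq_matI) auto
  finally show ?case .
qed

lemma spectral_decay:
  fixes B :: "real mat"
  assumes B: "B \<in> carrier_mat m m" and m: "m > 0"
    and t: "0 < t" "t * spectral_radius (map_mat complex_of_real B) < 1"
  shows "\<exists>c q. 0 \<le> q \<and> q < 1 \<and> (\<forall>K r l. r < m \<longrightarrow> l < m \<longrightarrow> \<bar>((t \<cdot>\<^sub>m B) ^\<^sub>m K) $$ (r,l)\<bar> \<le> c * q^K)"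
proof -
  define Bc where "Bc = map_mat complex_of_real B"
  define \<rho> where "\<rho> = spectral_radius Bc"
  have Bc: "Bc \<in> carrier_mat m m" using B by (simp add: Bc_def)
  have "\<rho> \<in> norm ` spectrum Bc" unfolding \<rho>_def by (rule spectral_radius_mem_max(1)[OF Bc m])
  hence \<rho>0: "\<rho> \<ge> 0" by auto
  have t\<rho>: "t * \<rho> < 1" using t(2) by (simp add: \<rho>_def Bc_def)
  obtain t' where t': "t < t'" "t' * \<rho> < 1"
  proof (cases "\<rho> = 0")
    case True thus ?thesis using that[of "t+1"] by auto
  next
    case False
    hence "\<rho> > 0" using \<rho>0 by auto
    hence "t < 1 / \<rho>" using t\<rho> by (simp add: field_simps)
    then obtain t' where "t < t'" "t' < 1 / \<rho>" using dense by blast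
    thus ?thesis using that[of t'] \<open>\<rho> > 0\<close> by (simp add: field_simps)
  qed
  have t'0: "t' > 0" using t t' by auto
  define Bc' where "Bc' = map_mat complex_of_real (t' \<cdot>\<^sub>m B)"
  have Bc': "Bc' \<in> carrier_mat m m" using B by (simp add: Bc'_def)
  have Bc'_eq: "Bc' = complex_of_real t' \<cdot>\<^sub>m Bc"
    by (rule eq_matI) (auto simp: Bc'_def Bc_def)
  have sr': "spectral_radius Bc' < 1"
  proof -
    have "spectral_radius Bc' \<in> norm ` spectrum Bc'" by (rule spectral_radius_mem_max(1)[OF Bc' m])
    then obtain \<mu> where mu: "eigenvalue Bc' \<mu>" "spectral_radius Bc' = norm \<mu>"
      by (auto simp: spectrum_def)
    then obtain v where v: "eigenvector Bc' v \<mu>" by (auto simp: eigenvalue_def)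
    hence vc: "v \<in> carrier_vec m" "v \<noteq> 0\<^sub>v m" "Bc' *\<^sub>v v = \<mu> \<cdot>\<^sub>v v"
      using Bc' by (auto simp: eigenvector_def)
    have "Bc *\<^sub>v v = (\<mu> / complex_of_real t') \<cdot>\<^sub>v v"
    proof -
      have "complex_of_real t' \<cdot>\<^sub>v (Bc *\<^sub>v v) = \<mu> \<cdot>\<^sub>v v"
        using vc(3) smult_mat_vec_assoc'[OF Bc vc(1)] Bc'_eq by simp
      hence "(1 / complex_of_real t') \<cdot>\<^sub>v (complex_of_real t' \<cdot>\<^sub>v (Bc *\<^sub>v v)) = (1 / complex_of_real t') \<cdot>\<^sub>v (\<mu> \<cdot>\<^sub>v v)"
        by simp
      thus ?thesis using t'0 by (simp add: smult_smult_assoc)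
    qed
    hence "eigenvalue Bc (\<mu> / complex_of_real t')"
      using vc Bc by (auto simp: eigenvalue_def eigenvector_def)
    hence "norm (\<mu> / complex_of_real t') \<le> \<rho>"
      unfolding \<rho>_def by (intro spectral_radius_mem_max(2)[OF Bc m]) (auto simp: spectrum_def)
    hence "norm \<mu> \<le> t' * \<rho>" using t'0 by (simp add: norm_divide field_simps)
    thus ?thesis using mu t' by simp
  qed
  obtain c where c: "\<And>K. norm_bound (Bc' ^\<^sub>m K) c"
    using spectral_radius_jnf_norm_bound_less_1_upper_triangular[OF Bc' sr'] by auto
  have pw: "Bc' ^\<^sub>m K = map_mat complex_of_real ((t' \<cdot>\<^sub>m B) ^\<^sub>m K)" for K
    unfolding Bc'_def by (rule of_real_hom.mat_hom_pow[symmetric, of _ m]) (use B in auto)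
  have tB: "t \<cdot>\<^sub>m B = (t / t') \<cdot>\<^sub>m (t' \<cdot>\<^sub>m B)"
    by (rule eq_matI) (use t'0 in auto)
  show ?thesis
  proof (intro exI conjI allI impI)
    show "0 \<le> t / t'" using t t'0 by simp
    show "t / t' < 1" using t' t'0 by simp
    fix K r l assume rl: "r < m" "l < m"
    have "norm ((Bc' ^\<^sub>m K) $$ (r,l)) \<le> c" using c[of K] rl Bc' unfolding norm_bound_def by auto
    hence b: "\<bar>((t' \<cdot>\<^sub>m B) ^\<^sub>m K) $$ (r,l)\<bar> \<le> c" using rl B by (simp add: pw)
    have "((t \<cdot>\<^sub>m B) ^\<^sub>m K) $$ (r,l) = (t/t')^K * ((t' \<cdot>\<^sub>m B) ^\<^sub>m K) $$ (r,l)"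
      unfolding tB smult_pow_mat[of "t' \<cdot>\<^sub>m B" m, OF smult_carrier_mat[OF B]] using rl B by simp
    hence "\<bar>((t \<cdot>\<^sub>m B) ^\<^sub>m K) $$ (r,l)\<bar> = (t/t')^K * \<bar>((t' \<cdot>\<^sub>m B) ^\<^sub>m K) $$ (r,l)\<bar>"
      using t t'0 by (simp add: abs_mult)
    also have "\<dots> \<le> (t/t')^K * c" using b t t'0 by (intro mult_left_mono) auto
    finally show "\<bar>((t \<cdot>\<^sub>m B) ^\<^sub>m K) $$ (r,l)\<bar> \<le> c * (t/t')^K" by (simp add: mult.commute)
  qed
qed

lemma pow_mat_Suc_left:
  fixes X :: "'a::semiring_1 mat"
  assumes X: "X \<in> carrier_mat m m"
  shows "X ^\<^sub>m Suc k = X * X ^\<^sub>m k"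
proof (induction k)
  case 0 thus ?case using X by simp
next
  case (Suc k)
  have "X ^\<^sub>m Suc (Suc k) = (X * X ^\<^sub>m k) * X" using Suc by simp
  also have "\<dots> = X * (X ^\<^sub>m k * X)" using X by (simp add: assoc_mult_mat[of _ m m _ m _ m])
  finally show ?case by simp
qed

lemma mat_vec_entry:
  assumes "X \<in> carrier_mat m m" "v \<in> carrier_vec m" "r < m"
  shows "(X *\<^sub>v v) $ r = (\<Sum>l<m. X $$ (r,l) * v $ l)"
  using assms by (auto simp: scalar_prod_def lessThan_atLeast0 intro!: sum.cong)

lemma del_vert_props:
  assumes "j < n" "r < n - 1"
  shows "del_vert j r < n" "del_vert j r \<noteq> j"
  using assms by (auto simp: del_vert_def)

lemma del_vert_pos:
  assumes "i \<noteq> j" "i < n" "j < n"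
  shows "del_vert j (del_pos j i) = i" "del_pos j i < n - 1"
  using assms by (auto simp: del_vert_def del_pos_def)

lemma del_vert_bij:
  assumes "j < n"
  shows "bij_betw (del_vert j) {..<n - 1} ({0..<n} - {j})"
proof (rule bij_betw_byWitness[where f' = "del_pos j"])
  show "\<forall>a\<in>{..<n - 1}. del_pos j (del_vert j a) = a" by (auto simp: del_vert_def del_pos_def)
  show "\<forall>a'\<in>{0..<n} - {j}. del_vert j (del_pos j a') = a'" by (auto simp: del_vert_def del_pos_def)
  show "del_vert j ` {..<n - 1} \<subseteq> {0..<n} - {j}" using assms by (auto simp: del_vert_def)
  show "del_pos j ` ({0..<n} - {j}) \<subseteq> {..<n - 1}" using assms by (auto simp: del_pos_def)
qed

theorem lemma6:
  fixes n :: nat and E :: "'e set" and ends :: "'e \<Rightarrow> nat set" and w :: "'e \<Rightarrow> real"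
    and i j :: nat and t :: real
  assumes mg: "multigraph n E ends"
    and conn: "connected_mg n E ends"
    and n2: "n \<ge> 2"
    and wpos: "\<forall>e\<in>E. w e > 0"
    and ij: "i < n" "j < n" "i \<noteq> j"
    and t: "0 < t" "t * spectral_radius (map_mat complex_of_real (mat_delete (adj_mat n E ends w) j j)) < 1"
  shows "\<exists>N \<in> carrier_mat (n - 1) (n - 1).
           N * (inverse t \<cdot>\<^sub>m 1\<^sub>m (n - 1) - mat_delete (adj_mat n E ends w) j j) = 1\<^sub>m (n - 1) \<and>
           (inverse t \<cdot>\<^sub>m 1\<^sub>m (n - 1) - mat_delete (adj_mat n E ends w) j j) * N = 1\<^sub>m (n - 1) \<and>
           ((walk_weight (\<lambda>e. t * w e)) has_sum
              (row N (del_pos j i) \<bullet> col_del (adj_mat n E ends w) j))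
            (hitting_walks n E ends i j)"
proof -
  define n' where "n' = n - 1"
  define A where "A = adj_mat n E ends w"
  define B where "B = mat_delete A j j"
  define b where "b = col_del A j"
  define C where "C = inverse t \<cdot>\<^sub>m 1\<^sub>m n' - B"
  define M where "M = t \<cdot>\<^sub>m B"
  have n'0: "n' > 0" using n2 by (simp add: n'_def)
  have A: "A \<in> carrier_mat n n" by (simp add: A_def adj_mat_def)
  have B: "B \<in> carrier_mat n' n'" using mat_delete_carrier[OF A] by (simp add: B_def n'_def)
  have b: "b \<in> carrier_vec n'" using A by (simp add: b_def col_del_def n'_def)
  have C: "C \<in> carrier_mat n' n'" using B by (simp add: C_def minus_carrier_mat)
  have M: "M \<in> carrier_mat n' n'" using B by (simp add: M_def)
  have dimM[simp]: "dim_row M = n'" "dim_col M = n'" using M by auto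
  have Bidx: "B $$ (r,l) = A $$ (del_vert j r, del_vert j l)" if "r < n'" "l < n'" for r l
    using that A by (simp add: B_def mat_delete_def del_vert_def n'_def)
  have bidx: "b $ r = A $$ (del_vert j r, j)" if "r < n'" for r
    using that A by (simp add: b_def col_del_def n'_def)
  obtain c q where q: "0 \<le> q" "q < 1"
    and cq: "\<And>K r l. r < n' \<Longrightarrow> l < n' \<Longrightarrow> \<bar>(M ^\<^sub>m K) $$ (r,l)\<bar> \<le> c * q^K"
    using spectral_decay[OF B n'0 t(1)] t(2) unfolding M_def B_def A_def by blast
  have decay: "(\<lambda>K. (M ^\<^sub>m K *\<^sub>v v) $ r) \<longlonglongrightarrow> 0" if v: "v \<in> carrier_vec n'" and r: "r < n'" for v r
  proof (rule Lim_null_comparison)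
    define D where "D = c * (\<Sum>l<n'. \<bar>v $ l\<bar>)"
    show "\<forall>\<^sub>F K in sequentially. norm ((M ^\<^sub>m K *\<^sub>v v) $ r) \<le> q ^ K * D"
    proof (intro always_eventually allI)
      fix K
      have "norm ((M ^\<^sub>m K *\<^sub>v v) $ r) = \<bar>\<Sum>l<n'. (M ^\<^sub>m K) $$ (r,l) * v $ l\<bar>"
        using mat_vec_entry[OF pow_carrier_mat[OF M] v r] by simp
      also have "\<dots> \<le> (\<Sum>l<n'. \<bar>(M ^\<^sub>m K) $$ (r,l) * v $ l\<bar>)" by (rule sum_abs)
      also have "\<dots> \<le> (\<Sum>l<n'. c * q^K * \<bar>v $ l\<bar>)"
        by (rule sum_mono) (use cq r in \<open>auto simp: abs_mult intro!: mult_right_mono\<close>)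
      also have "\<dots> = q ^ K * D" by (simp add: D_def sum_distrib_left ac_simps)
      finally show "norm ((M ^\<^sub>m K *\<^sub>v v) $ r) \<le> q ^ K * D" .
    qed
    show "(\<lambda>K. q ^ K * D) \<longlonglongrightarrow> 0"
      by (rule tendsto_mult_left_zero) (rule LIMSEQ_power_zero, use q in simp)
  qed
  have Mv: "(M *\<^sub>v v) $ r = t * (B *\<^sub>v v) $ r" if "v \<in> carrier_vec n'" "r < n'" for v r
    using that B by (simp add: M_def smult_mat_vec_assoc'[OF B])
  have Cv: "(C *\<^sub>v v) $ r = inverse t * v $ r - (B *\<^sub>v v) $ r" if v: "v \<in> carrier_vec n'" and r: "r < n'" for v r
  proof -
    have "C *\<^sub>v v = (inverse t \<cdot>\<^sub>m 1\<^sub>m n') *\<^sub>v v - B *\<^sub>v v"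
      unfolding C_def by (rule minus_mult_distrib_mat_vec) (use B v in auto)
    also have "(inverse t \<cdot>\<^sub>m 1\<^sub>m n') *\<^sub>v v = inverse t \<cdot>\<^sub>v v"
      using smult_mat_vec_assoc'[OF one_carrier_mat v] v by simp
    finally show ?thesis using v r B by simp
  qed
  have ker: "v = 0\<^sub>v n'" if v: "v \<in> carrier_vec n'" and Cv0: "C *\<^sub>v v = 0\<^sub>v n'" for v
  proof -
    have Mvv: "M *\<^sub>v v = v"
    proof (rule eq_vecI)
      fix r assume "r < dim_vec v"
      hence r: "r < n'" using v by simp
      have "inverse t * v $ r - (B *\<^sub>v v) $ r = 0" using Cv[OF v r] Cv0 r by simp
      thus "(M *\<^sub>v v) $ r = v $ r" using Mv[OF v r] t(1) by (simp add: field_simps)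
    qed (use M v in simp)
    have pw: "M ^\<^sub>m K *\<^sub>v v = v" for K
    proof (induction K)
      case 0 thus ?case using v by simp
    next
      case (Suc K)
      have "M ^\<^sub>m Suc K *\<^sub>v v = (M ^\<^sub>m K * M) *\<^sub>v v" by simp
      also have "\<dots> = M ^\<^sub>m K *\<^sub>v (M *\<^sub>v v)" using M v by (simp add: assoc_mult_mat_vec[of _ n' n' _ n'])
      finally show ?case using Mvv Suc by simp
    qed
    show ?thesis
    proof (rule eq_vecI)
      fix r assume "r < dim_vec (0\<^sub>v n')"
      hence r: "r < n'" by simp
      have "(\<lambda>K. v $ r) \<longlonglongrightarrow> 0" using decay[OF v r] by (simp add: pw)
      hence "v $ r = 0" by (simp add: LIMSEQ_const_iff)
      thus "v $ r = 0\<^sub>v n' $ r" using r by simp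
    qed (use v in simp)
  qed
  have "det C \<noteq> 0"
    using det_0_iff_vec_prod_zero[OF C] ker by auto
  from det_non_zero_imp_unit[OF C this, of "()"]
  obtain N where N: "N \<in> carrier_mat n' n'" "N * C = 1\<^sub>m n'" "C * N = 1\<^sub>m n'"
    unfolding Units_def ring_mat_def by auto
  define x where "x = N *\<^sub>v b"
  have x: "x \<in> carrier_vec n'" using N b by (simp add: x_def)
  have Cx: "C *\<^sub>v x = b" unfolding x_def using N C b by (simp add: assoc_mult_mat_vec[symmetric, of _ n' n' _ n'])
  have xeq: "x = t \<cdot>\<^sub>v b + M *\<^sub>v x"
  proof (rule eq_vecI)
    fix r assume "r < dim_vec (t \<cdot>\<^sub>v b + M *\<^sub>v x)"
    hence r: "r < n'" using b by simp
    have "inverse t * x $ r - (B *\<^sub>v x) $ r = b $ r" using Cv[OF x r] Cx by simp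
    thus "x $ r = (t \<cdot>\<^sub>v b + M *\<^sub>v x) $ r" using r b M x Mv[OF x r] t(1) by (simp add: field_simps)
  qed (use x b M in simp)
  define y where "y K = M ^\<^sub>m K *\<^sub>v (t \<cdot>\<^sub>v b)" for K
  define z where "z K = M ^\<^sub>m K *\<^sub>v x" for K
  have y: "y K \<in> carrier_vec n'" for K unfolding y_def
    by (rule mult_mat_vec_carrier[OF pow_carrier_mat[OF M]]) (use b in simp)
  have zc: "z K \<in> carrier_vec n'" for K unfolding z_def
    by (rule mult_mat_vec_carrier[OF pow_carrier_mat[OF M]]) (use x in simp)
  have zstep: "z K = y K + z (Suc K)" for K
  proof -
    have "z K = M ^\<^sub>m K *\<^sub>v (t \<cdot>\<^sub>v b + M *\<^sub>v x)" unfolding z_def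
      by (rule arg_cong[OF xeq, of "\<lambda>v. M ^\<^sub>m K *\<^sub>v v"])
    also have "\<dots> = y K + M ^\<^sub>m K *\<^sub>v (M *\<^sub>v x)" unfolding y_def
      by (rule mult_add_distrib_mat_vec[OF pow_carrier_mat[OF M]]) (use M b x in simp_all)
    finally have 1: "z K = y K + M ^\<^sub>m K *\<^sub>v (M *\<^sub>v x)" .
    have 2: "M ^\<^sub>m K *\<^sub>v (M *\<^sub>v x) = z (Suc K)" unfolding z_def
      using assoc_mult_mat_vec[OF pow_carrier_mat[OF M] M x, of K] by simp
    show ?thesis using 1 2 by simp
  qed
  have xsum: "x $ r = (\<Sum>k<K. y k $ r) + z K $ r" if r: "r < n'" for r K
  proof (induction K)
    case 0 thus ?case using x by (simp add: z_def)
  next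
    case (Suc K)
    have "z K $ r = (y K + z (Suc K)) $ r" by (subst zstep[of K]) (rule refl)
    also have "\<dots> = y K $ r + z (Suc K) $ r" using r zc[of "Suc K"] by simp
    finally show ?case using Suc by simp
  qed
  have ysums: "(\<lambda>k. y k $ r) sums (x $ r)" if r: "r < n'" for r
  proof -
    have lim: "(\<lambda>K. x $ r - z K $ r) \<longlonglongrightarrow> x $ r - 0"
      by (rule tendsto_diff[OF tendsto_const]) (use decay[OF x r] in \<open>simp only: z_def\<close>)
    have eq: "(\<lambda>K. x $ r - z K $ r) = (\<lambda>K. \<Sum>k<K. y k $ r)"
    proof (rule ext)
      fix K
      have "x $ r = (\<Sum>k<K. y k $ r) + z K $ r" by (rule xsum[OF r])
      thus "x $ r - z K $ r = (\<Sum>k<K. y k $ r)" by linarith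
    qed
    show ?thesis unfolding sums_def using lim unfolding eq by simp
  qed
  define G where "G u m = sum (walk_weight (\<lambda>e. t * w e)) (Sw n E ends j u m)" for u m
  have Gy: "G (del_vert j r) (Suc k) = y k $ r" if "r < n'" for r k
    using that
  proof (induction k arbitrary: r)
    case 0
    have r: "r < n'" by fact
    note dv = del_vert_props[OF ij(2) r[unfolded n'_def]]
    have "G (del_vert j r) (Suc 0) = t * A $$ (del_vert j r, j)"
      unfolding G_def A_def by (rule G_1[OF mg dv(2) dv(1) ij(2)])
    thus ?case using r b by (simp add: y_def bidx)
  next
    case (Suc k)
    have r: "r < n'" by fact
    note dv = del_vert_props[OF ij(2) r[unfolded n'_def]]
    have "G (del_vert j r) (Suc (Suc k)) =
      (\<Sum>v\<in>{0..<n}-{j}. t * A $$ (del_vert j r, v) * G v (Suc k))"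
      unfolding G_def A_def by (rule G_SS[OF mg dv(2) dv(1) ij(2)])
    also have "\<dots> = (\<Sum>l<n'. t * A $$ (del_vert j r, del_vert j l) * G (del_vert j l) (Suc k))"
      using sum.reindex_bij_betw[OF del_vert_bij[OF ij(2)], of "\<lambda>v. t * A $$ (del_vert j r, v) * G v (Suc k)"]
      by (simp add: n'_def)
    also have "\<dots> = (\<Sum>l<n'. t * (B $$ (r,l) * y k $ l))"
      by (rule sum.cong) (use Suc.IH r in \<open>auto simp: Bidx\<close>)
    also have "\<dots> = (M *\<^sub>v y k) $ r"
      using Mv[OF y r] mat_vec_entry[OF B y r] by (simp add: sum_distrib_left)
    also have "M *\<^sub>v y k = y (Suc k)"
    proof -
      have "y (Suc k) = (M * M ^\<^sub>m k) *\<^sub>v (t \<cdot>\<^sub>v b)" unfolding y_def by (simp only: pow_mat_Suc_left[OF M])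
      also have "\<dots> = M *\<^sub>v y k" unfolding y_def
        by (rule assoc_mult_mat_vec[of _ n' n' _ n']) (use M b in auto)
      finally show ?thesis by simp
    qed
    finally show ?case .
  qed
  define r0 where "r0 = del_pos j i"
  have r0: "r0 < n'" "del_vert j r0 = i" using del_vert_pos[OF ij(3) ij(1) ij(2)] by (auto simp: r0_def n'_def)
  have Gsums: "(\<lambda>m. G i m) sums (x $ r0)"
  proof -
    have "(\<lambda>m. G i (Suc m)) sums (x $ r0)" using ysums[OF r0(1)] Gy[OF r0(1)] r0(2) by simp
    moreover have "G i 0 = 0" by (simp add: G_def Sw_0[OF ij(3)])
    ultimately show ?thesis by (simp add: sums_Suc_iff)
  qed
  have hs: "(walk_weight (\<lambda>e. t * w e) has_sum (x $ r0)) (hitting_walks n E ends i j)"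
  proof (rule has_sum_partition_nonneg[where S = "Sw n E ends j i"])
    fix p assume p: "p \<in> hitting_walks n E ends i j"
    hence "set (snd p) \<subseteq> E \<times> {0..<n}" using is_walk_set[OF mg] by (auto simp: hitting_walks_def)
    thus "walk_weight (\<lambda>e. t * w e) p \<ge> 0" unfolding walk_weight_def
      using wpos t(1) by (intro prod_list_nonneg) (auto intro!: less_imp_le)
  next
    show "hitting_walks n E ends i j = (\<Union>m. Sw n E ends j i m)" by (auto simp: Sw_def)
  next
    show "finite (Sw n E ends j i m)" for m by (rule finite_Sw[OF mg])
  next
    show "Sw n E ends j i m \<inter> Sw n E ends j i m' = {}" if "m \<noteq> m'" for m m'
      using that by (auto simp: Sw_def)
  next
    show "(\<lambda>m. sum (walk_weight (\<lambda>e. t * w e)) (Sw n E ends j i m)) sums x $ r0"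
      using Gsums by (simp add: G_def)
  qed
  have "row N r0 \<bullet> b = x $ r0" using N r0 by (simp add: x_def)
  show ?thesis
    apply (rule bexI[of _ N])
    using N hs \<open>row N r0 \<bullet> b = x $ r0\<close>
    unfolding C_def B_def A_def b_def r0_def n'_def by auto
qed

end
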